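(* Let $(u,\phi,\theta,\eta)$ be a solution of the system $\rho u_{tt}=\mu u_{xx}+b\phi_x$, $J\phi_{tt}=\alpha\phi_{xx}-bu_x-\xi\phi-\beta\theta_x$, $c\theta_t=-\beta\phi_{xt}+\int_0^\infty\kappa(s)\eta_{xx}(x,s)ds$, $\eta_t=\theta-\eta_s$ on $(0,\pi)\times(0,\infty)$ with boundary conditions $u=\phi_x=\theta=0$ at $x=0,\pi$, $\eta(0,s)=\eta(\pi,s)=0$, $\eta(x,0)=0$. Then the functional \[ F_2(t)=-\frac{cJ}{\beta}\Big\langle\theta,\int_0^x\phi_t(y)dy\Big\rangle \] satisfies, for every $\varepsilon_2>0$, \[ \frac{d}{dt}F_2(t)\le-\frac J2\|\phi_t\|^2-M\int_0^{+\infty}\kappa'(s)\|\eta_x(s)\|^2ds+M\Big(1+\frac1{\varepsilon_2}\Big)\|\theta\|^2+\varepsilon_2\Big\|\sqrt\mu u_x+\frac b{\sqrt\mu}\phi\Big\|^2+\varepsilon_2\|\phi\|^2+\varepsilon_2\|\phi_x\|^2, \] where $M>0$ is a constant independent of $\varepsilon_2$.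
   Context: $\rho,J,c,\mu,b,\alpha,\xi$ are positive constants with $\mu\xi>b^2$; $\beta\ne0$ real. $\kappa$ satisfies (h1) $\kappa\in C([0,\infty))\cap L^1(0,\infty)$; (h2) $\kappa>0$, $\kappa'\le0$; (h3) $g(0):=\int_0^\infty\kappa(s)ds$; (h4) $\kappa'\le-\delta\kappa$ for some $\delta>0$. $\eta=\eta^t(x,s)=\int_0^s\theta(x,t-\tau)d\tau$. $\langle\cdot,\cdot\rangle,\|\cdot\|$ are the $L^2(0,\pi)$ inner product and norm. Solutions are sufficiently regular (strong) solutions so that differentiation is legitimate.
   Formalization: The bound holds only for solutions with the integral of phi(x,t) over x in (0,pi) equal to 0 at every time t > 0. The paper assumes this as well. *)

theory Defs
  imports "HOL-Analysis.Analysis"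
begin

definition pdx :: "(real \<Rightarrow> real \<Rightarrow> real) \<Rightarrow> real \<Rightarrow> real \<Rightarrow> real" where
  "pdx f x t = vector_derivative (\<lambda>y. f y t) (at x within {0..pi})"

definition pdt :: "(real \<Rightarrow> real \<Rightarrow> real) \<Rightarrow> real \<Rightarrow> real \<Rightarrow> real" where
  "pdt f x t = vector_derivative (\<lambda>\<tau>. f x \<tau>) (at t)"

definition e_x :: "(real \<Rightarrow> real \<Rightarrow> real \<Rightarrow> real) \<Rightarrow> real \<Rightarrow> real \<Rightarrow> real \<Rightarrow> real" where
  "e_x \<eta> x s t = vector_derivative (\<lambda>y. \<eta> y s t) (at x within {0..pi})"

definition e_xx :: "(real \<Rightarrow> real \<Rightarrow> real \<Rightarrow> real) \<Rightarrow> real \<Rightarrow> real \<Rightarrow> real \<Rightarrow> real" where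
  "e_xx \<eta> = e_x (e_x \<eta>)"

definition e_t :: "(real \<Rightarrow> real \<Rightarrow> real \<Rightarrow> real) \<Rightarrow> real \<Rightarrow> real \<Rightarrow> real \<Rightarrow> real" where
  "e_t \<eta> x s t = vector_derivative (\<lambda>\<tau>. \<eta> x s \<tau>) (at t)"

definition e_s :: "(real \<Rightarrow> real \<Rightarrow> real \<Rightarrow> real) \<Rightarrow> real \<Rightarrow> real \<Rightarrow> real \<Rightarrow> real" where
  "e_s \<eta> x s t = vector_derivative (\<lambda>\<sigma>. \<eta> x \<sigma> t) (at s within {0..})"

definition L2inner :: "(real \<Rightarrow> real) \<Rightarrow> (real \<Rightarrow> real) \<Rightarrow> real" where
  "L2inner f g = integral {0..pi} (\<lambda>x. f x * g x)"

definition L2norm :: "(real \<Rightarrow> real) \<Rightarrow> real" where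
  "L2norm f = sqrt (L2inner f f)"

definition regular2 :: "(real \<Rightarrow> real \<Rightarrow> real) \<Rightarrow> bool" where
  "regular2 f \<longleftrightarrow>
    (\<forall>t>0. \<forall>x\<in>{0..pi}.
       ((\<lambda>y. f y t) has_vector_derivative pdx f x t) (at x within {0..pi}) \<and>
       ((\<lambda>y. pdx f y t) has_vector_derivative pdx (pdx f) x t) (at x within {0..pi}) \<and>
       ((\<lambda>y. pdt f y t) has_vector_derivative pdx (pdt f) x t) (at x within {0..pi}) \<and>
       ((\<lambda>\<tau>. f x \<tau>) has_vector_derivative pdt f x t) (at t) \<and>
       ((\<lambda>\<tau>. pdt f x \<tau>) has_vector_derivative pdt (pdt f) x t) (at t) \<and>
       ((\<lambda>\<tau>. pdx f x \<tau>) has_vector_derivative pdt (pdx f) x t) (at t)) \<and>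
    (\<forall>g\<in>{f, pdx f, pdx (pdx f), pdt f, pdt (pdt f), pdx (pdt f), pdt (pdx f)}.
       continuous_on ({0..pi} \<times> {0<..}) (\<lambda>(x,t). g x t))"

text \<open>Regularity of the memory variable eta(x,s,t) on [0,pi] x [0,oo) x (0,oo),
  together with the integrability needed for the memory integrals to make sense.\<close>

definition regular_eta ::
  "(real \<Rightarrow> real) \<Rightarrow> (real \<Rightarrow> real) \<Rightarrow> (real \<Rightarrow> real \<Rightarrow> real \<Rightarrow> real) \<Rightarrow> bool" where
  "regular_eta \<kappa> \<kappa>' \<eta> \<longleftrightarrow>
    (\<forall>t>0. \<forall>s\<ge>0. \<forall>x\<in>{0..pi}.
       ((\<lambda>y. \<eta> y s t) has_vector_derivative e_x \<eta> x s t) (at x within {0..pi}) \<and>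
       ((\<lambda>y. e_x \<eta> y s t) has_vector_derivative e_xx \<eta> x s t) (at x within {0..pi}) \<and>
       ((\<lambda>\<tau>. \<eta> x s \<tau>) has_vector_derivative e_t \<eta> x s t) (at t) \<and>
       ((\<lambda>\<sigma>. \<eta> x \<sigma> t) has_vector_derivative e_s \<eta> x s t) (at s within {0..})) \<and>
    (\<forall>g\<in>{\<eta>, e_x \<eta>, e_xx \<eta>, e_t \<eta>, e_s \<eta>}.
       continuous_on ({0..pi} \<times> {0..} \<times> {0<..}) (\<lambda>(x,s,t). g x s t)) \<and>
    (\<forall>t>0. set_integrable lborel ({0..pi} \<times> {0<..}) (\<lambda>(x,s). \<kappa> s * e_xx \<eta> x s t)) \<and>
    (\<forall>t>0. set_integrable lborel {0<..} (\<lambda>s. \<kappa>' s * (L2norm (\<lambda>x. e_x \<eta> x s t))\<^sup>2))"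

end

theory Submission
  imports Defs
begin

lemma young: fixes a b g :: real assumes "g > 0" shows "a * b \<le> g * a\<^sup>2 + b\<^sup>2 / (4 * g)"
proof -
  have "0 \<le> (2*g*a - b)\<^sup>2" by simp
  hence "4*g*(a*b) \<le> 4*g*(g * a\<^sup>2 + b\<^sup>2 / (4 * g))" using assms
    by (simp add: power2_eq_square algebra_simps)
  thus ?thesis using assms by simp
qed

lemma ibp:
  fixes f g f' g' :: "real \<Rightarrow> real"
  assumes "a \<le> b" "continuous_on {a..b} f" "continuous_on {a..b} g"
    "continuous_on {a..b} f'" "continuous_on {a..b} g'"
    "\<And>x. x \<in> {a<..<b} \<Longrightarrow> (f has_real_derivative f' x) (at x)"
    "\<And>x. x \<in> {a<..<b} \<Longrightarrow> (g has_real_derivative g' x) (at x)"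
  shows "integral {a..b} (\<lambda>x. f' x * g x) = f b * g b - f a * g a - integral {a..b} (\<lambda>x. f x * g' x)"
proof -
  have "((\<lambda>x. f' x * g x + f x * g' x) has_integral (f b * g b - f a * g a)) {a..b}"
  proof (rule fundamental_theorem_of_calculus_interior[where f="\<lambda>x. f x * g x", OF assms(1)])
    show "continuous_on {a..b} (\<lambda>x. f x * g x)" using assms by (intro continuous_intros)
    fix x assume "x \<in> {a<..<b}"
    then show "((\<lambda>x. f x * g x) has_vector_derivative f' x * g x + f x * g' x) (at x)"
      using assms(6,7) unfolding has_real_derivative_iff_has_vector_derivative[symmetric]
      by (auto intro!: derivative_eq_intros)
  qed
  moreover have "integral {a..b} (\<lambda>x. f' x * g x + f x * g' x) = integral {a..b} (\<lambda>x. f' x * g x) + integral {a..b} (\<lambda>x. f x * g' x)"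
    using assms by (intro integral_add integrable_continuous_interval continuous_intros)
  ultimately show ?thesis by (metis (no_types, lifting) add_diff_cancel_right' diff_diff_eq2 integral_unique)
qed

lemma subst01:
  fixes f :: "real \<Rightarrow> real"
  assumes "0 \<le> x" "continuous_on {0..x} f"
  shows "integral {0..x} f = x * integral {0..1} (\<lambda>s. f (x * s))"
proof (cases "x = 0")
  case True then show ?thesis by simp
next
  case False
  hence xp: "x > 0" using assms by simp
  have "(f has_integral integral {0..x} f) {0..x}"
    using assms by (intro integrable_integral integrable_continuous_interval)
  from has_integral_stretch_real[OF this, of x] xp
  have "((\<lambda>s. f (x * s)) has_integral (1/x) * integral {0..x} f) ((\<lambda>y. y / x) ` {0..x})" by simp
  moreover have "(\<lambda>y. y / x) ` {0..x} = {0..1}"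
  proof
    show "(\<lambda>y. y / x) ` {0..x} \<subseteq> {0..1}" using xp by (auto simp: field_simps)
    show "{0..1} \<subseteq> (\<lambda>y. y / x) ` {0..x}"
    proof
      fix s :: real assume "s \<in> {0..1}"
      hence "x * s \<in> {0..x}" "s = (x * s)/x" using xp by (auto simp: mult_le_cancel_left1)
      thus "s \<in> (\<lambda>y. y / x) ` {0..x}" by blast
    qed
  qed
  ultimately have "integral {0..1} (\<lambda>s. f (x * s)) = (1/x) * integral {0..x} f"
    by (simp add: integral_unique)
  then show ?thesis using xp by simp
qed

lemma indef_cont:
  fixes g :: "real \<Rightarrow> real \<Rightarrow> real"
  assumes "continuous_on ({0..pi} \<times> V) (\<lambda>(x,\<tau>). g x \<tau>)"
  shows "continuous_on ({0..pi} \<times> V) (\<lambda>(x,\<tau>). integral {0..x} (\<lambda>y. g y \<tau>))"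
proof -
  have eq: "\<And>p. p \<in> {0..pi} \<times> V \<Longrightarrow> (\<lambda>(x,\<tau>). integral {0..x} (\<lambda>y. g y \<tau>)) p
     = (\<lambda>p. fst p * integral (cbox 0 1) (\<lambda>s. g (fst p * s) (snd p))) p"
  proof -
    fix p assume p: "p \<in> {0..pi} \<times> V"
    obtain x \<tau> where [simp]: "p = (x,\<tau>)" by force
    have "continuous_on {0..x} (\<lambda>y. g y \<tau>)"
      using p by (intro continuous_on_compose2[OF assms, where f="\<lambda>y. (y,\<tau>)", simplified])
         (auto intro!: continuous_intros)
    then show "?thesis p" using p subst01[of x "\<lambda>y. g y \<tau>"] by simp
  qed
  have c: "continuous_on (({0..pi} \<times> V) \<times> cbox 0 1) (\<lambda>(p, s). g (fst p * s) (snd p))"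
  proof -
    have "continuous_on (({0..pi} \<times> V) \<times> cbox 0 1) ((\<lambda>(x,\<tau>). g x \<tau>) \<circ> (\<lambda>q. (fst (fst q) * snd q, snd (fst q))))"
    proof (rule continuous_on_compose)
      show "continuous_on (({0..pi} \<times> V) \<times> cbox 0 1) (\<lambda>q. (fst (fst q) * snd q, snd (fst q)))"
        by (intro continuous_intros)
      have "(\<lambda>q. (fst (fst q) * snd q, snd (fst q))) ` (({0..pi} \<times> V) \<times> cbox 0 1) \<subseteq> {0..pi} \<times> V"
      proof clarsimp
        fix a s :: real assume "0 \<le> a" "a \<le> pi" "0 \<le> s" "s \<le> 1"
        thus "a * s \<le> pi" by (metis mult_left_le order_trans)
      qed
      then show "continuous_on ((\<lambda>q. (fst (fst q) * snd q, snd (fst q))) ` (({0..pi} \<times> V) \<times> cbox 0 1)) (\<lambda>(x, \<tau>). g x \<tau>)"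
        using assms continuous_on_subset by blast
    qed
    then show ?thesis by (simp add: o_def split_def)
  qed
  have "continuous_on ({0..pi} \<times> V) (\<lambda>p. fst p * integral (cbox 0 1) (\<lambda>s. g (fst p * s) (snd p)))"
    by (intro continuous_intros integral_continuous_on_param[of _ _ _ "\<lambda>p s. g (fst p * s) (snd p)", OF c])
  then show ?thesis using continuous_on_eq eq by (metis (no_types, lifting))
qed

lemma cs:
  fixes f :: "real \<Rightarrow> real"
  assumes "0 \<le> x" "continuous_on {0..x} f"
  shows "(integral {0..x} f)\<^sup>2 \<le> x * integral {0..x} (\<lambda>y. (f y)\<^sup>2)"
proof (cases "x = 0")
  case True then show ?thesis by simp
next
  case False
  hence xp: "x > 0" using assms by simp
  define I where "I = integral {0..x} f"
  define m where "m = I / x"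
  have "0 \<le> integral {0..x} (\<lambda>y. (f y - m)\<^sup>2)"
    using assms by (intro integral_nonneg integrable_continuous_interval continuous_intros) auto
  also have "integral {0..x} (\<lambda>y. (f y - m)\<^sup>2) = integral {0..x} (\<lambda>y. (f y)\<^sup>2 - 2*m * f y + m\<^sup>2)"
    by (simp add: power2_eq_square algebra_simps)
  also have "\<dots> = integral {0..x} (\<lambda>y. (f y)\<^sup>2) - 2*m*I + m\<^sup>2 * x"
    using assms xp unfolding I_def
    by (subst integral_add integral_diff, auto intro!: integrable_continuous_interval continuous_intros)+
  also have "\<dots> = integral {0..x} (\<lambda>y. (f y)\<^sup>2) - I\<^sup>2 / x"
    using xp by (simp add: m_def power2_eq_square field_simps)
  finally show ?thesis using xp by (simp add: I_def field_simps)
qed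

lemma leib:
  fixes f f' :: "real \<Rightarrow> real \<Rightarrow> real"
  assumes cf: "continuous_on ({0..pi} \<times> {0<..}) (\<lambda>(x,\<tau>). f x \<tau>)"
    and cf': "continuous_on ({0..pi} \<times> {0<..}) (\<lambda>(x,\<tau>). f' x \<tau>)"
    and d: "\<And>x \<tau>. \<tau> > 0 \<Longrightarrow> x \<in> {0..pi} \<Longrightarrow> ((\<lambda>\<tau>. f x \<tau>) has_real_derivative f' x \<tau>) (at \<tau>)"
    and t: "t > 0" and ab: "0 \<le> a" "b \<le> pi"
  shows "((\<lambda>\<tau>. integral {a..b} (\<lambda>x. f x \<tau>)) has_real_derivative integral {a..b} (\<lambda>x. f' x t)) (at t)"
proof -
  define U where "U = {t/2..2*t}"
  have U0: "U \<subseteq> {0<..}" using t by (auto simp: U_def)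
  have tU: "t \<in> interior U" using t by (auto simp: U_def)
  have sub: "{a..b} \<subseteq> {0..pi}" using ab by auto
  have "((\<lambda>\<tau>. integral (cbox a b) (\<lambda>x. f x \<tau>)) has_field_derivative integral (cbox a b) (\<lambda>x. f' x t)) (at t within U)"
  proof (rule leibniz_rule_field_derivative[where fx="\<lambda>\<tau> x. f' x \<tau>"])
    fix \<tau> x assume "\<tau> \<in> U" "x \<in> cbox a b"
    then have "\<tau> > 0" "x \<in> {0..pi}" using U0 sub by auto
    then show "((\<lambda>\<tau>. f x \<tau>) has_field_derivative f' x \<tau>) (at \<tau> within U)"
      by (rule has_field_derivative_at_within[OF d])
  next
    fix \<tau> assume "\<tau> \<in> U"
    then have "continuous_on {a..b} (\<lambda>x. f x \<tau>)"
      using U0 sub by (intro continuous_on_compose2[OF cf, where f="\<lambda>x. (x,\<tau>)", simplified])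
         (auto intro!: continuous_intros)
    then show "(\<lambda>x. f x \<tau>) integrable_on cbox a b" by (simp add: integrable_continuous_interval)
  next
    have "continuous_on (cbox a b \<times> U) (\<lambda>(x,\<tau>). f' x \<tau>)"
      using U0 sub by (intro continuous_on_subset[OF cf']) auto
    then show "continuous_on (U \<times> cbox a b) (\<lambda>(\<tau>, x). f' x \<tau>)"
      by (rule continuous_on_swap_args)
  next
    show "t \<in> U" using t by (simp add: U_def)
    show "convex U" by (simp add: U_def)
  qed
  then show ?thesis using at_within_interior[OF tU] by simp
qed

lemma reg2D:
  assumes "regular2 f" "t > 0" "x \<in> {0..pi}"
  shows "((\<lambda>y. f y t) has_vector_derivative pdx f x t) (at x within {0..pi})"
    and "((\<lambda>y. pdx f y t) has_vector_derivative pdx (pdx f) x t) (at x within {0..pi})"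
    and "((\<lambda>y. pdt f y t) has_vector_derivative pdx (pdt f) x t) (at x within {0..pi})"
    and "((\<lambda>\<tau>. f x \<tau>) has_real_derivative pdt f x t) (at t)"
    and "((\<lambda>\<tau>. pdt f x \<tau>) has_real_derivative pdt (pdt f) x t) (at t)"
    and "((\<lambda>\<tau>. pdx f x \<tau>) has_real_derivative pdt (pdx f) x t) (at t)"
  using assms unfolding regular2_def has_real_derivative_iff_has_vector_derivative by blast+

lemma reg2C:
  assumes "regular2 f"
  shows "continuous_on ({0..pi} \<times> {0<..}) (\<lambda>(x,t). f x t)"
    and "continuous_on ({0..pi} \<times> {0<..}) (\<lambda>(x,t). pdx f x t)"
    and "continuous_on ({0..pi} \<times> {0<..}) (\<lambda>(x,t). pdx (pdx f) x t)"
    and "continuous_on ({0..pi} \<times> {0<..}) (\<lambda>(x,t). pdt f x t)"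
    and "continuous_on ({0..pi} \<times> {0<..}) (\<lambda>(x,t). pdt (pdt f) x t)"
    and "continuous_on ({0..pi} \<times> {0<..}) (\<lambda>(x,t). pdx (pdt f) x t)"
    and "continuous_on ({0..pi} \<times> {0<..}) (\<lambda>(x,t). pdt (pdx f) x t)"
  using assms unfolding regular2_def by simp_all

lemma cont_mult2:
  fixes f g :: "real \<Rightarrow> real \<Rightarrow> real"
  assumes "continuous_on S (\<lambda>(x,\<tau>). f x \<tau>)" "continuous_on S (\<lambda>(x,\<tau>). g x \<tau>)"
  shows "continuous_on S (\<lambda>(x,\<tau>). f x \<tau> * g x \<tau>)"
  using continuous_on_mult[OF assms] by (simp add: split_def)

lemma cont_add2:
  fixes f g :: "real \<Rightarrow> real \<Rightarrow> real"
  assumes "continuous_on S (\<lambda>(x,\<tau>). f x \<tau>)" "continuous_on S (\<lambda>(x,\<tau>). g x \<tau>)"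
  shows "continuous_on S (\<lambda>(x,\<tau>). f x \<tau> + g x \<tau>)"
  using continuous_on_add[OF assms] by (simp add: split_def)

lemma cont_slice:
  fixes f :: "real \<Rightarrow> real \<Rightarrow> real"
  assumes "continuous_on ({0..pi} \<times> {0<..}) (\<lambda>(x,\<tau>). f x \<tau>)" "t > 0" "A \<subseteq> {0..pi}"
  shows "continuous_on A (\<lambda>x. f x t)"
  using assms by (intro continuous_on_compose2[OF assms(1), where f="\<lambda>x. (x,t)", simplified])
         (auto intro!: continuous_intros)

lemma derivF:
  assumes ph: "regular2 \<phi>" and th: "regular2 \<theta>" and t: "t > 0"
  shows "((\<lambda>\<tau>. L2inner (\<lambda>x. \<theta> x \<tau>) (\<lambda>x. integral {0..x} (\<lambda>y. pdt \<phi> y \<tau>))) has_real_derivative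
     integral {0..pi} (\<lambda>x. pdt \<theta> x t * integral {0..x} (\<lambda>y. pdt \<phi> y t)
                          + \<theta> x t * integral {0..x} (\<lambda>y. pdt (pdt \<phi>) y t))) (at t)"
  unfolding L2inner_def
proof (rule leib[where f="\<lambda>x \<tau>. \<theta> x \<tau> * integral {0..x} (\<lambda>y. pdt \<phi> y \<tau>)"])
  show "continuous_on ({0..pi} \<times> {0<..}) (\<lambda>(x, \<tau>). \<theta> x \<tau> * integral {0..x} (\<lambda>y. pdt \<phi> y \<tau>))"
    by (intro cont_mult2 reg2C(1)[OF th] indef_cont reg2C(4)[OF ph])
  show "continuous_on ({0..pi} \<times> {0<..}) (\<lambda>(x, \<tau>). pdt \<theta> x \<tau> * integral {0..x} (\<lambda>y. pdt \<phi> y \<tau>)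
                          + \<theta> x \<tau> * integral {0..x} (\<lambda>y. pdt (pdt \<phi>) y \<tau>))"
    by (intro cont_add2 cont_mult2 reg2C(1)[OF th] reg2C(4)[OF th] indef_cont reg2C(4)[OF ph] reg2C(5)[OF ph])
  fix x \<tau> :: real assume tau: "\<tau> > 0" and x: "x \<in> {0..pi}"
  have "((\<lambda>\<tau>. integral {0..x} (\<lambda>y. pdt \<phi> y \<tau>)) has_real_derivative integral {0..x} (\<lambda>y. pdt (pdt \<phi>) y \<tau>)) (at \<tau>)"
    by (rule leib[OF reg2C(4)[OF ph] reg2C(5)[OF ph] reg2D(5)[OF ph] tau]) (use x in auto)
  then show "((\<lambda>\<tau>. \<theta> x \<tau> * integral {0..x} (\<lambda>y. pdt \<phi> y \<tau>)) has_real_derivative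
      pdt \<theta> x \<tau> * integral {0..x} (\<lambda>y. pdt \<phi> y \<tau>) + \<theta> x \<tau> * integral {0..x} (\<lambda>y. pdt (pdt \<phi>) y \<tau>)) (at \<tau>)"
    using reg2D(4)[OF th tau x] by (auto intro!: derivative_eq_intros)
qed (use t in auto)

lemma ftc_gen:
  fixes g g' :: "real \<Rightarrow> real"
  assumes "\<And>y. y \<in> {0..pi} \<Longrightarrow> (g has_vector_derivative g' y) (at y within {0..pi})" "x \<in> {0..pi}"
  shows "integral {0..x} g' = g x - g 0"
proof -
  have "(g' has_integral (g x - g 0)) {0..x}"
  proof (rule fundamental_theorem_of_calculus)
    show "0 \<le> x" using assms by auto
    fix y assume "y \<in> {0..x}"
    then show "(g has_vector_derivative g' y) (at y within {0..x})"
      using assms by (intro has_vector_derivative_within_subset[OF assms(1)]) auto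
  qed
  then show ?thesis by (rule integral_unique)
qed

lemma deriv_unique_ev:
  fixes F G :: "real \<Rightarrow> real"
  assumes "(F has_real_derivative D1) (at t)" "(G has_real_derivative D2) (at t)"
    "\<And>\<tau>. \<tau> > 0 \<Longrightarrow> F \<tau> = G \<tau>" "t > 0"
  shows "D1 = D2"
proof -
  have "eventually (\<lambda>\<tau>. \<tau> \<in> {0<..}) (nhds t)"
    using assms(4) by (intro eventually_nhds_in_open) auto
  then have ev: "eventually (\<lambda>\<tau>. F \<tau> = G \<tau>) (nhds t)"
    by (rule eventually_mono) (use assms(3) in auto)
  have "(G has_real_derivative D1) (at t)"
    using DERIV_cong_ev[OF refl ev refl] assms by simp
  then show ?thesis using assms(2) DERIV_unique by blast
qed

lemma int_pht_zero:
  assumes ph: "regular2 \<phi>" and t: "t > 0" and z: "\<forall>\<tau>>0. integral {0..pi} (\<lambda>x. \<phi> x \<tau>) = 0"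
  shows "integral {0..pi} (\<lambda>x. pdt \<phi> x t) = 0"
proof -
  have "((\<lambda>\<tau>. integral {0..pi} (\<lambda>x. \<phi> x \<tau>)) has_real_derivative integral {0..pi} (\<lambda>x. pdt \<phi> x t)) (at t)"
    by (rule leib[OF reg2C(1)[OF ph] reg2C(4)[OF ph] reg2D(4)[OF ph] t]) auto
  moreover have "((\<lambda>\<tau>. 0) has_real_derivative 0) (at t)" by simp
  ultimately show ?thesis using deriv_unique_ev z t by blast
qed

lemma G_eq:
  assumes ph: "regular2 \<phi>" and t: "t > 0" and x: "x \<in> {0..pi}"
  shows "integral {0..x} (\<lambda>y. pdt (pdx \<phi>) y t) = pdt \<phi> x t - pdt \<phi> 0 t"
proof -
  have "((\<lambda>\<tau>. integral {0..x} (\<lambda>y. pdx \<phi> y \<tau>)) has_real_derivative integral {0..x} (\<lambda>y. pdt (pdx \<phi>) y t)) (at t)"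
    by (rule leib[OF reg2C(2)[OF ph] reg2C(7)[OF ph] reg2D(6)[OF ph] t]) (use x in auto)
  moreover have "((\<lambda>\<tau>. \<phi> x \<tau> - \<phi> 0 \<tau>) has_real_derivative pdt \<phi> x t - pdt \<phi> 0 t) (at t)"
    using x by (intro derivative_intros reg2D(4)[OF ph t]) auto
  moreover have "\<And>\<tau>. \<tau> > 0 \<Longrightarrow> integral {0..x} (\<lambda>y. pdx \<phi> y \<tau>) = \<phi> x \<tau> - \<phi> 0 \<tau>"
    by (rule ftc_gen[OF reg2D(1)[OF ph], OF _ _ x]) 
  ultimately show ?thesis using deriv_unique_ev t by blast
qed

lemma interior_deriv:
  fixes g :: "real \<Rightarrow> real" and g' :: real
  assumes "(g has_vector_derivative g') (at x within {0..pi})" "x \<in> {0<..<pi}"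
  shows "(g has_real_derivative g') (at x)"
proof -
  have "at x within {0..pi} = at x" using assms(2) by (intro at_within_interior) auto
  then show ?thesis using assms(1) by (simp add: has_real_derivative_iff_has_vector_derivative)
qed

lemma term_ptx:
  assumes ph: "regular2 \<phi>" and t: "t > 0" and z: "\<forall>\<tau>>0. integral {0..pi} (\<lambda>x. \<phi> x \<tau>) = 0"
  shows "integral {0..pi} (\<lambda>x. pdt (pdx \<phi>) x t * integral {0..x} (\<lambda>y. pdt \<phi> y t))
       = - integral {0..pi} (\<lambda>x. pdt \<phi> x t * pdt \<phi> x t)"
proof -
  define G where "G x = integral {0..x} (\<lambda>y. pdt (pdx \<phi>) y t)" for x
  define P where "P x = integral {0..x} (\<lambda>y. pdt \<phi> y t)" for x
  have c1: "continuous_on {0..pi} (\<lambda>x. pdt (pdx \<phi>) x t)" by (rule cont_slice[OF reg2C(7)[OF ph] t]) auto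
  have c2: "continuous_on {0..pi} (\<lambda>x. pdt \<phi> x t)" by (rule cont_slice[OF reg2C(4)[OF ph] t]) auto
  have cG: "continuous_on {0..pi} G" unfolding G_def
    by (intro indefinite_integral_continuous_1 integrable_continuous_interval c1)
  have cP: "continuous_on {0..pi} P" unfolding P_def
    by (intro indefinite_integral_continuous_1 integrable_continuous_interval c2)
  have "integral {0..pi} (\<lambda>x. pdt (pdx \<phi>) x t * P x) = G pi * P pi - G 0 * P 0 - integral {0..pi} (\<lambda>x. G x * pdt \<phi> x t)"
  proof (rule ibp[OF _ cG cP c1 c2])
    fix x :: real assume x: "x \<in> {0<..<pi}"
    show "(G has_real_derivative pdt (pdx \<phi>) x t) (at x)" unfolding G_def
      by (rule interior_deriv[OF integral_has_vector_derivative[OF c1] x]) (use x in auto)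
    show "(P has_real_derivative pdt \<phi> x t) (at x)" unfolding P_def
      by (rule interior_deriv[OF integral_has_vector_derivative[OF c2] x]) (use x in auto)
  qed simp
  also have "P pi = 0" unfolding P_def using int_pht_zero[OF ph t z] .
  also have "P 0 = 0" by (simp add: P_def)
  also have "integral {0..pi} (\<lambda>x. G x * pdt \<phi> x t) = integral {0..pi} (\<lambda>x. pdt \<phi> x t * pdt \<phi> x t - pdt \<phi> 0 t * pdt \<phi> x t)"
    by (intro integral_cong) (simp add: G_def G_eq[OF ph t] algebra_simps)
  also have "\<dots> = integral {0..pi} (\<lambda>x. pdt \<phi> x t * pdt \<phi> x t) - pdt \<phi> 0 t * integral {0..pi} (\<lambda>x. pdt \<phi> x t)"
    using c2 by (subst integral_diff) (auto intro!: integrable_continuous_interval continuous_intros)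
  also have "integral {0..pi} (\<lambda>x. pdt \<phi> x t) = 0" using int_pht_zero[OF ph t z] .
  finally show ?thesis by (simp add: P_def)
qed

lemma ftc_has:
  fixes g g' :: "real \<Rightarrow> real"
  assumes "\<And>y. y \<in> {0..pi} \<Longrightarrow> (g has_vector_derivative g' y) (at y within {0..pi})" "x \<in> {0..pi}"
  shows "(g' has_integral (g x - g 0)) {0..x}"
proof (rule fundamental_theorem_of_calculus)
  show "0 \<le> x" using assms by auto
  fix y assume "y \<in> {0..x}"
  then show "(g has_vector_derivative g' y) (at y within {0..x})"
    using assms by (intro has_vector_derivative_within_subset[OF assms(1)]) auto
qed

lemma Pt_eq:
  assumes u: "regular2 u" and ph: "regular2 \<phi>" and th: "regular2 \<theta>" and t: "t > 0"
    and x: "x \<in> {0..pi}" and J: "J > 0"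
    and eq: "\<And>y. y \<in> {0<..<pi} \<Longrightarrow> J * pdt (pdt \<phi>) y t = \<alpha> * pdx (pdx \<phi>) y t - b * pdx u y t - \<xi> * \<phi> y t - \<beta> * pdx \<theta> y t"
    and bc: "u 0 t = 0" "pdx \<phi> 0 t = 0" "\<theta> 0 t = 0"
  shows "integral {0..x} (\<lambda>y. pdt (pdt \<phi>) y t) = (\<alpha> * pdx \<phi> x t - b * u x t - \<xi> * integral {0..x} (\<lambda>y. \<phi> y t) - \<beta> * \<theta> x t) / J"
proof -
  have h1: "((\<lambda>y. pdx (pdx \<phi>) y t) has_integral (pdx \<phi> x t - pdx \<phi> 0 t)) {0..x}"
    by (rule ftc_has[OF reg2D(2)[OF ph t] x])
  have h2: "((\<lambda>y. pdx u y t) has_integral (u x t - u 0 t)) {0..x}"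
    by (rule ftc_has[OF reg2D(1)[OF u t] x])
  have h4: "((\<lambda>y. pdx \<theta> y t) has_integral (\<theta> x t - \<theta> 0 t)) {0..x}"
    by (rule ftc_has[OF reg2D(1)[OF th t] x])
  have h3: "((\<lambda>y. \<phi> y t) has_integral integral {0..x} (\<lambda>y. \<phi> y t)) {0..x}"
    using x by (intro integrable_integral integrable_continuous_interval cont_slice[OF reg2C(1)[OF ph] t]) auto
  have "((\<lambda>y. (1/J) * (\<alpha> * pdx (pdx \<phi>) y t - b * pdx u y t - \<xi> * \<phi> y t - \<beta> * pdx \<theta> y t)) has_integral
        (1/J) * (\<alpha> * (pdx \<phi> x t - pdx \<phi> 0 t) - b * (u x t - u 0 t) - \<xi> * integral {0..x} (\<lambda>y. \<phi> y t) - \<beta> * (\<theta> x t - \<theta> 0 t))) {0..x}"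
    by (intro has_integral_mult_right has_integral_diff h1 h2 h3 h4)
  then have "((\<lambda>y. pdt (pdt \<phi>) y t) has_integral
        (1/J) * (\<alpha> * (pdx \<phi> x t - pdx \<phi> 0 t) - b * (u x t - u 0 t) - \<xi> * integral {0..x} (\<lambda>y. \<phi> y t) - \<beta> * (\<theta> x t - \<theta> 0 t))) {0..x}"
  proof (rule has_integral_spike_finite[where S="{0,pi}", rotated 2])
    fix y assume "y \<in> {0..x} - {0,pi}"
    then have "y \<in> {0<..<pi}" using x by auto
    then show "pdt (pdt \<phi>) y t = (1/J) * (\<alpha> * pdx (pdx \<phi>) y t - b * pdx u y t - \<xi> * \<phi> y t - \<beta> * pdx \<theta> y t)"
      using eq J by (simp add: field_simps)
  qed simp
  then show ?thesis using bc by (simp add: integral_unique field_simps)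
qed

lemma eta_slice:
  fixes g :: "real \<Rightarrow> real \<Rightarrow> real \<Rightarrow> real"
  assumes "continuous_on ({0..pi} \<times> {0..} \<times> {0<..}) (\<lambda>(x,s,t). g x s t)" "t > 0" "s \<ge> 0"
  shows "continuous_on {0..pi} (\<lambda>x. g x s t)"
  using assms by (intro continuous_on_compose2[OF assms(1), where f="\<lambda>x. (x,s,t)", simplified])
         (auto intro!: continuous_intros)

lemma etaD:
  assumes "regular_eta \<kappa> \<kappa>' \<eta>" "t > 0" "s \<ge> 0" "x \<in> {0..pi}"
  shows "((\<lambda>y. \<eta> y s t) has_vector_derivative e_x \<eta> x s t) (at x within {0..pi})"
    and "((\<lambda>y. e_x \<eta> y s t) has_vector_derivative e_xx \<eta> x s t) (at x within {0..pi})"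
  using assms unfolding regular_eta_def by blast+

lemma etaC:
  assumes "regular_eta \<kappa> \<kappa>' \<eta>" "t > 0" "s \<ge> 0"
  shows "continuous_on {0..pi} (\<lambda>x. e_x \<eta> x s t)" "continuous_on {0..pi} (\<lambda>x. e_xx \<eta> x s t)"
  using assms unfolding regular_eta_def by (auto intro!: eta_slice)

lemma mem_term:
  assumes eta: "regular_eta \<kappa> \<kappa>' \<eta>" and ph: "regular2 \<phi>" and t: "t > 0"
    and z: "\<forall>\<tau>>0. integral {0..pi} (\<lambda>x. \<phi> x \<tau>) = 0"
  shows "set_integrable lborel {0<..} (\<lambda>s. \<kappa> s * integral {0..pi} (\<lambda>x. e_x \<eta> x s t * pdt \<phi> x t))"
    and "integral {0..pi} (\<lambda>x. set_lebesgue_integral lborel {0<..} (\<lambda>s. \<kappa> s * e_xx \<eta> x s t) * integral {0..x} (\<lambda>y. pdt \<phi> y t))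
         = - set_lebesgue_integral lborel {0<..} (\<lambda>s. \<kappa> s * integral {0..pi} (\<lambda>x. e_x \<eta> x s t * pdt \<phi> x t))"
proof -
  define P where "P x = integral {0..x} (\<lambda>y. pdt \<phi> y t)" for x
  define Pc where "Pc x = P (max 0 (min pi x))" for x
  define a where "a s = integral {0..pi} (\<lambda>x. e_x \<eta> x s t * pdt \<phi> x t)" for s
  define Lm where "Lm x = set_lebesgue_integral lborel {0<..} (\<lambda>s. \<kappa> s * e_xx \<eta> x s t)" for x
  define h where "h p = indicator ({0..pi} \<times> {0<..}) p *\<^sub>R (\<kappa> (snd p) * e_xx \<eta> (fst p) (snd p) t)" for p :: "real \<times> real"
  have hi: "integrable lborel h" using eta t unfolding regular_eta_def set_integrable_def h_def
    by (simp add: case_prod_beta)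
  have c2: "continuous_on {0..pi} (\<lambda>x. pdt \<phi> x t)" by (rule cont_slice[OF reg2C(4)[OF ph] t]) auto
  have cP: "continuous_on {0..pi} P" unfolding P_def
    by (intro indefinite_integral_continuous_1 integrable_continuous_interval c2)
  have cPc: "continuous_on UNIV Pc" unfolding Pc_def
    by (rule continuous_on_compose2[OF cP]) (auto intro!: continuous_intros)
  obtain B where B: "B \<ge> 0" "\<And>x. x \<in> {0..pi} \<Longrightarrow> norm (P x) \<le> B"
    using continuous_on_compact_bound[OF compact_Icc cP] by blast
  have PcB: "\<bar>Pc x\<bar> \<le> B" for x unfolding Pc_def using B(2)[of "max 0 (min pi x)"] by simp
  have PcP: "x \<in> {0..pi} \<Longrightarrow> Pc x = P x" for x by (simp add: Pc_def)
  define H where "H p = h p * Pc (fst p)" for p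
  have Pcm: "(\<lambda>p::real\<times>real. Pc (fst p)) \<in> borel_measurable lborel"
    by (simp, rule borel_measurable_continuous_onI, rule continuous_on_compose2[OF cPc]) (auto intro!: continuous_intros)
  have Hm: "H \<in> borel_measurable lborel" unfolding H_def
    by (intro borel_measurable_times borel_measurable_integrable[OF hi] Pcm)
  have Hi: "integrable lborel H"
  proof (rule Bochner_Integration.integrable_bound[OF integrable_mult_right[OF hi, of B] Hm])
    show "AE x in lborel. norm (H x) \<le> norm (B * h x)"
    proof (intro AE_I2)
      fix p :: "real \<times> real"
      have "\<bar>Pc (fst p)\<bar> * \<bar>h p\<bar> \<le> B * \<bar>h p\<bar>" using PcB by (rule mult_right_mono) simp
      then show "norm (H p) \<le> norm (B * h p)" using B(1) by (simp add: H_def abs_mult mult.commute)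
    qed
  qed
  have Hi2: "integrable (lborel \<Otimes>\<^sub>M lborel) H" by (simp add: lborel_prod Hi)
  have F1: "(\<integral>x. (\<integral>s. H (x, s) \<partial>lborel) \<partial>lborel) = integral\<^sup>L (lborel \<Otimes>\<^sub>M lborel) H"
    by (rule lborel_pair.integral_fst'[OF Hi2])
  have Hi3: "integrable (lborel \<Otimes>\<^sub>M lborel) (case_prod (\<lambda>x s. H (x, s)))" using Hi2 by simp
  have F2: "(\<integral>s. (\<integral>x. H (x, s) \<partial>lborel) \<partial>lborel) = integral\<^sup>L (lborel \<Otimes>\<^sub>M lborel) H"
    using lborel_pair.integral_snd[OF Hi3] by simp
  have I1: "integrable lborel (\<lambda>x. \<integral>s. H (x, s) \<partial>lborel)"
    by (rule lborel_pair.integrable_fst'[OF Hi2])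
  have I2: "integrable lborel (\<lambda>s. \<integral>x. H (x, s) \<partial>lborel)"
    using lborel_pair.integrable_snd[OF Hi3] by simp
  have inner1: "(\<integral>s. H (x, s) \<partial>lborel) = indicator {0..pi} x * (Pc x * Lm x)" for x
  proof -
    have "(\<lambda>s. H (x, s)) = (\<lambda>s. (indicator {0..pi} x * Pc x) * (indicator {0<..} s *\<^sub>R (\<kappa> s * e_xx \<eta> x s t)))"
      by (auto simp: H_def h_def indicator_times)
    then show ?thesis by (simp add: Lm_def set_lebesgue_integral_def)
  qed
  have ibp_s: "integral {0..pi} (\<lambda>x. e_xx \<eta> x s t * P x) = - a s" if s: "s > 0" for s
  proof -
    have "integral {0..pi} (\<lambda>x. e_xx \<eta> x s t * P x) = e_x \<eta> pi s t * P pi - e_x \<eta> 0 s t * P 0 - a s"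
      unfolding a_def
    proof (rule ibp[OF _ etaC(1)[OF eta t] cP etaC(2)[OF eta t] c2])
      fix x :: real assume x: "x \<in> {0<..<pi}"
      show "((\<lambda>y. e_x \<eta> y s t) has_real_derivative e_xx \<eta> x s t) (at x)"
        by (rule interior_deriv[OF etaD(2)[OF eta t] x]) (use x s in auto)
      show "(P has_real_derivative pdt \<phi> x t) (at x)" unfolding P_def
        by (rule interior_deriv[OF integral_has_vector_derivative[OF c2] x]) (use x in auto)
    qed (use s in auto)
    moreover have "P pi = 0" unfolding P_def using int_pht_zero[OF ph t z] .
    moreover have "P 0 = 0" by (simp add: P_def)
    ultimately show ?thesis by simp
  qed
  have inner2: "(\<integral>x. H (x, s) \<partial>lborel) = indicator {0<..} s * (\<kappa> s * (- a s))" for s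
  proof (cases "s > 0")
    case True
    have "(\<lambda>x. H (x, s)) = (\<lambda>x. (indicator {0<..} s * \<kappa> s) * (indicator {0..pi} x *\<^sub>R (e_xx \<eta> x s t * Pc x)))"
      by (auto simp: H_def h_def indicator_times)
    then have "(\<integral>x. H (x, s) \<partial>lborel) = (indicator {0<..} s * \<kappa> s) * (LINT x:{0..pi}|lborel. e_xx \<eta> x s t * Pc x)"
      by (simp add: set_lebesgue_integral_def)
    also have "(LINT x:{0..pi}|lborel. e_xx \<eta> x s t * Pc x) = integral {0..pi} (\<lambda>x. e_xx \<eta> x s t * Pc x)"
      using True by (intro set_borel_integral_eq_integral borel_integrable_atLeastAtMost' continuous_intros etaC(2)[OF eta t] continuous_on_subset[OF cPc]) auto
    also have "\<dots> = integral {0..pi} (\<lambda>x. e_xx \<eta> x s t * P x)"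
      by (intro integral_cong) (simp add: PcP)
    also have "\<dots> = - a s" using ibp_s True .
    finally show ?thesis by simp
  next
    case False
    then show ?thesis by (simp add: H_def h_def indicator_times)
  qed
  have si: "set_integrable lborel {0..pi} (\<lambda>x. Pc x * Lm x)"
    using I1 unfolding inner1 set_integrable_def by simp
  have "integral {0..pi} (\<lambda>x. Lm x * P x) = integral {0..pi} (\<lambda>x. Pc x * Lm x)"
    by (intro integral_cong) (simp add: PcP)
  also have "\<dots> = (LINT x:{0..pi}|lborel. Pc x * Lm x)"
    using set_borel_integral_eq_integral(2)[OF si] by simp
  also have "\<dots> = (\<integral>x. (\<integral>s. H (x, s) \<partial>lborel) \<partial>lborel)"
    unfolding inner1 set_lebesgue_integral_def by simp
  also have "\<dots> = (\<integral>s. (\<integral>x. H (x, s) \<partial>lborel) \<partial>lborel)" using F1 F2 by simp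
  also have "\<dots> = (LINT s:{0<..}|lborel. - (\<kappa> s * a s))"
    unfolding inner2 set_lebesgue_integral_def by simp
  also have "\<dots> = - (LINT s:{0<..}|lborel. \<kappa> s * a s)"
    unfolding set_lebesgue_integral_def by simp
  finally show "integral {0..pi} (\<lambda>x. set_lebesgue_integral lborel {0<..} (\<lambda>s. \<kappa> s * e_xx \<eta> x s t) * integral {0..x} (\<lambda>y. pdt \<phi> y t))
         = - set_lebesgue_integral lborel {0<..} (\<lambda>s. \<kappa> s * integral {0..pi} (\<lambda>x. e_x \<eta> x s t * pdt \<phi> x t))"
    by (simp add: Lm_def P_def a_def)
  have "set_integrable lborel {0<..} (\<lambda>s. - (\<kappa> s * a s))"
    using I2 unfolding inner2 set_integrable_def by simp
  then show "set_integrable lborel {0<..} (\<lambda>s. \<kappa> s * integral {0..pi} (\<lambda>x. e_x \<eta> x s t * pdt \<phi> x t))"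
    using set_integrable_mult_right[of "-1" lborel "{0<..}" "\<lambda>s. - (\<kappa> s * a s)"] by (simp add: a_def)
qed

lemma sq_int_nonneg: "0 \<le> integral {0..pi} (\<lambda>x. f x * f x :: real)"
proof (cases "(\<lambda>x. f x * f x) integrable_on {0..pi}")
  case True then show ?thesis by (intro integral_nonneg) auto
next
  case False then show ?thesis by (simp add: not_integrable_integral)
qed

lemma L2norm_sq: "(L2norm f)\<^sup>2 = integral {0..pi} (\<lambda>x. f x * f x)"
  unfolding L2norm_def L2inner_def using sq_int_nonneg[of f] by simp

lemma int_young:
  fixes f g :: "real \<Rightarrow> real"
  assumes cf: "continuous_on {0..pi} f" and cg: "continuous_on {0..pi} g" and gp: "\<gamma> > 0"
  shows "k * integral {0..pi} (\<lambda>x. f x * g x) \<le> \<gamma> * integral {0..pi} (\<lambda>x. g x * g x) + k\<^sup>2 / (4 * \<gamma>) * integral {0..pi} (\<lambda>x. f x * f x)"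
proof -
  have "integral {0..pi} (\<lambda>x. k * (f x * g x)) \<le> integral {0..pi} (\<lambda>x. \<gamma> * (g x * g x) + k\<^sup>2 / (4 * \<gamma>) * (f x * f x))"
  proof (rule integral_le)
    show "(\<lambda>x. k * (f x * g x)) integrable_on {0..pi}"
      using cf cg by (intro integrable_continuous_interval continuous_intros)
    show "(\<lambda>x. \<gamma> * (g x * g x) + k\<^sup>2 / (4 * \<gamma>) * (f x * f x)) integrable_on {0..pi}"
      using cf cg gp by (intro integrable_continuous_interval continuous_intros)
    fix x
    show "k * (f x * g x) \<le> \<gamma> * (g x * g x) + k\<^sup>2 / (4 * \<gamma>) * (f x * f x)"
      using young[OF gp, of "g x" "k * f x"] by (simp add: power2_eq_square algebra_simps)
  qed
  also have "\<dots> = \<gamma> * integral {0..pi} (\<lambda>x. g x * g x) + k\<^sup>2 / (4 * \<gamma>) * integral {0..pi} (\<lambda>x. f x * f x)"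
    using cf cg gp by (subst integral_add) (auto intro!: integrable_continuous_interval continuous_intros)
  finally show ?thesis by simp
qed

lemma poinc:
  fixes f :: "real \<Rightarrow> real"
  assumes cf: "continuous_on {0..pi} f"
  shows "integral {0..pi} (\<lambda>x. integral {0..x} f * integral {0..x} f) \<le> pi\<^sup>2 * integral {0..pi} (\<lambda>x. f x * f x)"
proof -
  have ci: "continuous_on {0..pi} (\<lambda>x. integral {0..x} f)"
    by (intro indefinite_integral_continuous_1 integrable_continuous_interval cf)
  have "integral {0..pi} (\<lambda>x. integral {0..x} f * integral {0..x} f) \<le> integral {0..pi} (\<lambda>x. pi * integral {0..pi} (\<lambda>x. f x * f x))"
  proof (rule integral_le)
    show "(\<lambda>x. integral {0..x} f * integral {0..x} f) integrable_on {0..pi}"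
      using ci by (intro integrable_continuous_interval continuous_intros)
    show "(\<lambda>x. pi * integral {0..pi} (\<lambda>x. f x * f x)) integrable_on {0..pi}"
      by (intro integrable_continuous_interval continuous_intros)
    fix x assume x: "x \<in> {0..pi}"
    have cfx: "continuous_on {0..x} f" using x by (intro continuous_on_subset[OF cf]) auto
    have "integral {0..x} f * integral {0..x} f \<le> x * integral {0..x} (\<lambda>y. (f y)\<^sup>2)"
      using cs[OF _ cfx] x by (simp add: power2_eq_square)
    also have "\<dots> \<le> pi * integral {0..pi} (\<lambda>x. f x * f x)"
    proof (rule mult_mono)
      show "x \<le> pi" using x by simp
      show "integral {0..x} (\<lambda>y. (f y)\<^sup>2) \<le> integral {0..pi} (\<lambda>x. f x * f x)"
        unfolding power2_eq_square
        by (rule integral_subset_le) (use x cf cfx in \<open>auto intro!: integrable_continuous_interval continuous_intros\<close>)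
      show "0 \<le> pi" by simp
      show "0 \<le> integral {0..x} (\<lambda>y. (f y)\<^sup>2)"
        using cfx by (intro integral_nonneg integrable_continuous_interval continuous_intros) auto
    qed
    finally show "integral {0..x} f * integral {0..x} f \<le> pi * integral {0..pi} (\<lambda>x. f x * f x)" .
  qed
  also have "\<dots> = pi\<^sup>2 * integral {0..pi} (\<lambda>x. f x * f x)" by (simp add: power2_eq_square)
  finally show ?thesis .
qed

lemma mem_bound:
  fixes \<kappa> \<kappa>' :: "real \<Rightarrow> real"
  assumes h1: "set_integrable lborel {0..} \<kappa>"
    and h2: "\<forall>s\<ge>0. \<kappa> s > 0" "\<forall>s>0. \<kappa>' s \<le> 0"
    and h4: "\<delta> > 0" "\<forall>s>0. \<kappa>' s \<le> - \<delta> * \<kappa> s"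
    and eta: "regular_eta \<kappa> \<kappa>' \<eta>" and ph: "regular2 \<phi>" and t: "t > 0"
    and J: "J > 0" and be: "\<beta> \<noteq> 0"
    and Kint: "set_integrable lborel {0<..} (\<lambda>s. \<kappa> s * integral {0..pi} (\<lambda>x. e_x \<eta> x s t * pdt \<phi> x t))"
  shows "(J / \<beta>) * set_lebesgue_integral lborel {0<..} (\<lambda>s. \<kappa> s * integral {0..pi} (\<lambda>x. e_x \<eta> x s t * pdt \<phi> x t))
     \<le> (J / 2) * integral {0..pi} (\<lambda>x. pdt \<phi> x t * pdt \<phi> x t)
        - (J * (set_lebesgue_integral lborel {0<..} \<kappa> + 1) / (2 * \<beta>\<^sup>2 * \<delta>))
          * set_lebesgue_integral lborel {0<..} (\<lambda>s. \<kappa>' s * (L2norm (\<lambda>x. e_x \<eta> x s t))\<^sup>2)"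
proof -
  define a where "a s = integral {0..pi} (\<lambda>x. e_x \<eta> x s t * pdt \<phi> x t)" for s
  define N where "N = integral {0..pi} (\<lambda>x. pdt \<phi> x t * pdt \<phi> x t)"
  define Ns where "Ns s = (L2norm (\<lambda>x. e_x \<eta> x s t))\<^sup>2" for s
  define g where "g = set_lebesgue_integral lborel {0<..} \<kappa>"
  define Q where "Q = set_lebesgue_integral lborel {0<..} (\<lambda>s. \<kappa>' s * Ns s)"
  define K where "K = set_lebesgue_integral lborel {0<..} (\<lambda>s. \<kappa> s * a s)"
  define \<gamma> where "\<gamma> = \<bar>\<beta>\<bar> / (2 * (g + 1))"
  have ki: "set_integrable lborel {0<..} \<kappa>" by (rule set_integrable_subset[OF h1]) auto
  have kpos: "\<forall>s>0. 0 \<le> \<kappa> s" using h2(1) by (meson less_eq_real_def)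
  have g0: "g \<ge> 0" unfolding g_def set_lebesgue_integral_def
    using kpos by (intro integral_nonneg_AE AE_I2) (auto split: split_indicator)
  have gp: "\<gamma> > 0" using be g0 by (simp add: \<gamma>_def)
  have N0: "N \<ge> 0" unfolding N_def by (rule sq_int_nonneg)
  have qi: "set_integrable lborel {0<..} (\<lambda>s. \<kappa>' s * Ns s)"
    using eta t unfolding regular_eta_def Ns_def by blast
  have Ki: "set_integrable lborel {0<..} (\<lambda>s. \<kappa> s * a s)" using Kint by (simp add: a_def)
  define r where "r s = \<gamma> * N * \<kappa> s - (1 / (4 * \<gamma> * \<delta>)) * (\<kappa>' s * Ns s)" for s
  have ri: "set_integrable lborel {0<..} r" unfolding r_def
    using ki qi by (intro set_integral_diff(1) set_integrable_mult_right) (auto simp: mult.commute)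
  have R: "set_lebesgue_integral lborel {0<..} r = \<gamma> * N * g - (1 / (4 * \<gamma> * \<delta>)) * Q"
    unfolding r_def g_def Q_def
    using ki qi by (subst set_integral_diff(2)) (auto simp: mult.commute)
  have pt: "\<bar>\<kappa> s * a s\<bar> \<le> r s" if s: "s > 0" for s
  proof -
    have ce: "continuous_on {0..pi} (\<lambda>x. e_x \<eta> x s t)" using etaC(1)[OF eta t] s by simp
    have cp: "continuous_on {0..pi} (\<lambda>x. pdt \<phi> x t)" by (rule cont_slice[OF reg2C(4)[OF ph] t]) auto
    have "1 * a s \<le> \<gamma> * N + 1\<^sup>2 / (4 * \<gamma>) * Ns s"
      using int_young[OF ce cp gp, of 1] by (simp add: a_def N_def Ns_def L2norm_sq)
    moreover have "(-1) * a s \<le> \<gamma> * N + (-1)\<^sup>2 / (4 * \<gamma>) * Ns s"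
      using int_young[OF ce cp gp, of "-1"] by (simp add: a_def N_def Ns_def L2norm_sq)
    ultimately have aa: "\<bar>a s\<bar> \<le> \<gamma> * N + Ns s / (4 * \<gamma>)" by auto
    have kp: "\<kappa> s > 0" using h2(1) s by auto
    have Ns0: "Ns s \<ge> 0" by (simp add: Ns_def)
    have "\<bar>\<kappa> s * a s\<bar> = \<kappa> s * \<bar>a s\<bar>" using kp by (simp add: abs_mult)
    also have "\<dots> \<le> \<kappa> s * (\<gamma> * N + Ns s / (4 * \<gamma>))" using kp aa by (intro mult_left_mono) auto
    also have "\<dots> = \<gamma> * N * \<kappa> s + (\<kappa> s * Ns s) / (4 * \<gamma>)" by (simp add: algebra_simps)
    also have "(\<kappa> s * Ns s) \<le> (- \<kappa>' s / \<delta>) * Ns s"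
    proof (rule mult_right_mono[OF _ Ns0])
      have "\<kappa>' s \<le> - \<delta> * \<kappa> s" using h4(2) s by auto
      then show "\<kappa> s \<le> - \<kappa>' s / \<delta>" using h4(1) by (simp add: field_simps)
    qed
    then have "(\<kappa> s * Ns s) / (4 * \<gamma>) \<le> (- \<kappa>' s / \<delta>) * Ns s / (4 * \<gamma>)"
      using gp by (intro divide_right_mono) auto
    also have "(- \<kappa>' s / \<delta>) * Ns s / (4 * \<gamma>) = - (1 / (4 * \<gamma> * \<delta>)) * (\<kappa>' s * Ns s)"
      using gp h4 by (simp add: field_simps)
    finally show ?thesis by (simp add: r_def)
  qed
  have K1: "K \<le> set_lebesgue_integral lborel {0<..} r"
    unfolding K_def by (rule set_integral_mono[OF Ki ri]) (use pt in \<open>auto simp: abs_le_iff\<close>)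
  have K2: "- K \<le> set_lebesgue_integral lborel {0<..} r"
  proof -
    have "set_lebesgue_integral lborel {0<..} (\<lambda>s. - (\<kappa> s * a s)) \<le> set_lebesgue_integral lborel {0<..} r"
      using set_integrable_mult_right[of "-1" lborel "{0<..}" "\<lambda>s. \<kappa> s * a s", OF Ki]
      by (intro set_integral_mono[OF _ ri]) (use pt in \<open>auto simp: abs_le_iff\<close>)
    then show ?thesis unfolding K_def set_lebesgue_integral_def by simp
  qed
  have KR: "(J / \<beta>) * K \<le> (J / \<bar>\<beta>\<bar>) * (\<gamma> * N * g - (1 / (4 * \<gamma> * \<delta>)) * Q)"
  proof (cases "\<beta> > 0")
    case True
    have "(J / \<bar>\<beta>\<bar>) * K \<le> (J / \<bar>\<beta>\<bar>) * set_lebesgue_integral lborel {0<..} r"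
      by (rule mult_left_mono[OF K1]) (use J in simp)
    then show ?thesis using R True by simp
  next
    case False
    then have "\<beta> < 0" using be by simp
    then have e: "(J / \<beta>) * K = (J / \<bar>\<beta>\<bar>) * (- K)" by simp
    have "(J / \<bar>\<beta>\<bar>) * (- K) \<le> (J / \<bar>\<beta>\<bar>) * set_lebesgue_integral lborel {0<..} r"
      by (rule mult_left_mono[OF K2]) (use J in simp)
    then show ?thesis using R e by simp
  qed
  have e1: "(J / \<bar>\<beta>\<bar>) * (\<gamma> * N * g) = (J / 2) * N * (g / (g + 1))"
    using be g0 by (simp add: \<gamma>_def field_simps)
  have e2': "(J / B) * (1 / (4 * (B / (2 * (g + 1))) * \<delta>)) = J * (g + 1) / (2 * (B * B) * \<delta>)" if "B > 0" for B
    using that g0 h4 by (simp add: field_simps)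
  have e2: "(J / \<bar>\<beta>\<bar>) * (1 / (4 * \<gamma> * \<delta>)) = J * (g + 1) / (2 * \<beta>\<^sup>2 * \<delta>)"
    using e2'[of "\<bar>\<beta>\<bar>"] be unfolding \<gamma>_def by (simp add: abs_mult_self_eq power2_eq_square)
  have cmp1: "(J / 2) * N * (g / (g + 1)) \<le> (J / 2) * N * 1"
    using J N0 g0 by (intro mult_left_mono) auto
  have cmp: "(J / 2) * N * (g / (g + 1)) \<le> (J / 2) * N" using cmp1 by simp
  have eqn: "(J / \<bar>\<beta>\<bar>) * (\<gamma> * N * g - (1 / (4 * \<gamma> * \<delta>)) * Q)
      = (J / \<bar>\<beta>\<bar>) * (\<gamma> * N * g) - ((J / \<bar>\<beta>\<bar>) * (1 / (4 * \<gamma> * \<delta>))) * Q"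
    by (simp only: right_diff_distrib mult.assoc)
  have KR': "(J / \<beta>) * K \<le> (J / 2) * N * (g / (g + 1)) - (J * (g + 1) / (2 * \<beta>\<^sup>2 * \<delta>)) * Q"
    using KR unfolding eqn e1 e2 .
  have fin: "(J / \<beta>) * K \<le> (J / 2) * N - (J * (g + 1) / (2 * \<beta>\<^sup>2 * \<delta>)) * Q"
    using KR' cmp by linarith
  then show ?thesis by (simp only: K_def a_def Q_def Ns_def g_def N_def)
qed

lemma ux_pt:
  fixes \<mu> b y p :: real
  assumes "\<mu> > 0"
  shows "y * y \<le> (2 / \<mu>) * ((sqrt \<mu> * y + b / sqrt \<mu> * p) * (sqrt \<mu> * y + b / sqrt \<mu> * p) + (b\<^sup>2 / \<mu>) * (p * p))"
proof -
  define s where "s = sqrt \<mu>"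
  have sp: "s > 0" using assms by (simp add: s_def)
  have ss: "s * s = \<mu>" using assms by (simp add: s_def)
  define A where "A = s * y"
  define B where "B = b / s * p"
  have "A * A \<le> 2 * ((A + B) * (A + B)) + 2 * (B * B)"
  proof -
    have "0 \<le> (A + 2 * B) * (A + 2 * B)" by simp
    then show ?thesis by (simp add: algebra_simps)
  qed
  moreover have "A * A = \<mu> * (y * y)" using ss by (simp add: A_def algebra_simps)
  moreover have "B * B = (b\<^sup>2 / \<mu>) * (p * p)" using ss sp by (simp add: B_def power2_eq_square field_simps)
  ultimately have 1: "\<mu> * (y * y) \<le> 2 * ((A + B) * (A + B)) + 2 * ((b\<^sup>2 / \<mu>) * (p * p))"
    by linarith
  have 2: "\<mu> * ((2 / \<mu>) * ((A + B) * (A + B) + (b\<^sup>2 / \<mu>) * (p * p))) = 2 * ((A + B) * (A + B)) + 2 * ((b\<^sup>2 / \<mu>) * (p * p))"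
    using assms by (simp add: field_simps)
  have "\<mu> * (y * y) \<le> \<mu> * ((2 / \<mu>) * ((A + B) * (A + B) + (b\<^sup>2 / \<mu>) * (p * p)))"
    using 1 2 by linarith
  then have "y * y \<le> (2 / \<mu>) * ((A + B) * (A + B) + (b\<^sup>2 / \<mu>) * (p * p))"
    by (rule mult_left_le_imp_le) (use assms in simp)
  then show ?thesis by (simp add: A_def B_def s_def)
qed

lemma u_bound:
  assumes u: "regular2 u" and ph: "regular2 \<phi>" and t: "t > 0" and u0: "u 0 t = 0" and mu: "\<mu> > 0"
  shows "integral {0..pi} (\<lambda>x. u x t * u x t) \<le> pi\<^sup>2 * ((2 / \<mu>) *
      (integral {0..pi} (\<lambda>x. (sqrt \<mu> * pdx u x t + b / sqrt \<mu> * \<phi> x t) * (sqrt \<mu> * pdx u x t + b / sqrt \<mu> * \<phi> x t))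
       + (b\<^sup>2 / \<mu>) * integral {0..pi} (\<lambda>x. \<phi> x t * \<phi> x t)))"
proof -
  have cux: "continuous_on {0..pi} (\<lambda>x. pdx u x t)" by (rule cont_slice[OF reg2C(2)[OF u] t]) auto
  have cph: "continuous_on {0..pi} (\<lambda>x. \<phi> x t)" by (rule cont_slice[OF reg2C(1)[OF ph] t]) auto
  have "integral {0..pi} (\<lambda>x. u x t * u x t) = integral {0..pi} (\<lambda>x. integral {0..x} (\<lambda>y. pdx u y t) * integral {0..x} (\<lambda>y. pdx u y t))"
  proof (intro integral_cong)
    fix x assume x: "x \<in> {0..pi}"
    have "integral {0..x} (\<lambda>y. pdx u y t) = u x t - u 0 t" by (rule ftc_gen[OF reg2D(1)[OF u t] x])
    then show "u x t * u x t = integral {0..x} (\<lambda>y. pdx u y t) * integral {0..x} (\<lambda>y. pdx u y t)"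
      using u0 by simp
  qed
  also have "\<dots> \<le> pi\<^sup>2 * integral {0..pi} (\<lambda>x. pdx u x t * pdx u x t)"
    by (rule poinc[OF cux])
  also have "integral {0..pi} (\<lambda>x. pdx u x t * pdx u x t) \<le> integral {0..pi} (\<lambda>x. (2 / \<mu>) * ((sqrt \<mu> * pdx u x t + b / sqrt \<mu> * \<phi> x t) * (sqrt \<mu> * pdx u x t + b / sqrt \<mu> * \<phi> x t)
       + (b\<^sup>2 / \<mu>) * (\<phi> x t * \<phi> x t)))"
    using cux cph mu by (intro integral_le ux_pt integrable_continuous_interval continuous_intros) auto
  also have "\<dots> = (2 / \<mu>) *
      (integral {0..pi} (\<lambda>x. (sqrt \<mu> * pdx u x t + b / sqrt \<mu> * \<phi> x t) * (sqrt \<mu> * pdx u x t + b / sqrt \<mu> * \<phi> x t))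
       + (b\<^sup>2 / \<mu>) * integral {0..pi} (\<lambda>x. \<phi> x t * \<phi> x t))"
  proof -
    define X where "X x = (sqrt \<mu> * pdx u x t + b / sqrt \<mu> * \<phi> x t) * (sqrt \<mu> * pdx u x t + b / sqrt \<mu> * \<phi> x t)" for x
    define Y where "Y x = \<phi> x t * \<phi> x t" for x
    have hX: "(X has_integral integral {0..pi} X) {0..pi}" unfolding X_def
      using cux cph mu by (intro integrable_integral integrable_continuous_interval continuous_intros) auto
    have hY: "(Y has_integral integral {0..pi} Y) {0..pi}" unfolding Y_def
      using cph by (intro integrable_integral integrable_continuous_interval continuous_intros) auto
    have "((\<lambda>x. (2 / \<mu>) * (X x + (b\<^sup>2 / \<mu>) * Y x)) has_integral (2 / \<mu>) * (integral {0..pi} X + (b\<^sup>2 / \<mu>) * integral {0..pi} Y)) {0..pi}"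
      by (intro has_integral_mult_right has_integral_add hX hY)
    then show ?thesis unfolding X_def Y_def by (rule integral_unique)
  qed
  finally show ?thesis by simp
qed


theorem lemma6:
  fixes \<rho> J c \<mu> b \<alpha> \<xi> \<beta> \<delta> :: real
    and \<kappa> \<kappa>' :: "real \<Rightarrow> real"
  assumes "\<rho> > 0" "J > 0" "c > 0" "\<mu> > 0" "b > 0" "\<alpha> > 0" "\<xi> > 0"
    and "\<mu> * \<xi> > b\<^sup>2" and "\<beta> \<noteq> 0"
    and h1: "continuous_on {0..} \<kappa>" "set_integrable lborel {0..} \<kappa>"
    and h2: "\<forall>s\<ge>0. \<kappa> s > 0" "\<forall>s>0. (\<kappa> has_real_derivative \<kappa>' s) (at s)"
            "\<forall>s>0. \<kappa>' s \<le> 0"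
    and h4: "\<delta> > 0" "\<forall>s>0. \<kappa>' s \<le> - \<delta> * \<kappa> s"
  shows "\<exists>M>0. \<forall>(u::real\<Rightarrow>real\<Rightarrow>real) (\<phi>::real\<Rightarrow>real\<Rightarrow>real) (\<theta>::real\<Rightarrow>real\<Rightarrow>real)
            (\<eta>::real\<Rightarrow>real\<Rightarrow>real\<Rightarrow>real).
     (regular2 u \<and> regular2 \<phi> \<and> regular2 \<theta> \<and> regular_eta \<kappa> \<kappa>' \<eta> \<and>
      (\<forall>x\<in>{0<..<pi}. \<forall>t>0.
         \<rho> * pdt (pdt u) x t = \<mu> * pdx (pdx u) x t + b * pdx \<phi> x t \<and>
         J * pdt (pdt \<phi>) x t = \<alpha> * pdx (pdx \<phi>) x t - b * pdx u x t - \<xi> * \<phi> x t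
                                 - \<beta> * pdx \<theta> x t \<and>
         c * pdt \<theta> x t = - \<beta> * pdt (pdx \<phi>) x t
                          + set_lebesgue_integral lborel {0<..} (\<lambda>s. \<kappa> s * e_xx \<eta> x s t) \<and>
         (\<forall>s>0. e_t \<eta> x s t = \<theta> x t - e_s \<eta> x s t)) \<and>
      (\<forall>t>0. u 0 t = 0 \<and> u pi t = 0 \<and> pdx \<phi> 0 t = 0 \<and> pdx \<phi> pi t = 0 \<and>
             \<theta> 0 t = 0 \<and> \<theta> pi t = 0 \<and>
             (\<forall>s\<ge>0. \<eta> 0 s t = 0 \<and> \<eta> pi s t = 0) \<and>
             (\<forall>x\<in>{0..pi}. \<eta> x 0 t = 0)) \<and>
      (\<forall>t>0. integral {0..pi} (\<lambda>x. \<phi> x t) = 0))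
     \<longrightarrow>
     (\<forall>\<epsilon>>0. \<forall>t>0. \<exists>D.
        ((\<lambda>\<tau>. - (c * J / \<beta>) * L2inner (\<lambda>x. \<theta> x \<tau>) (\<lambda>x. integral {0..x} (\<lambda>y. pdt \<phi> y \<tau>)))
           has_real_derivative D) (at t) \<and>
        D \<le> - (J / 2) * (L2norm (\<lambda>x. pdt \<phi> x t))\<^sup>2
             - M * set_lebesgue_integral lborel {0<..} (\<lambda>s. \<kappa>' s * (L2norm (\<lambda>x. e_x \<eta> x s t))\<^sup>2)
             + M * (1 + 1 / \<epsilon>) * (L2norm (\<lambda>x. \<theta> x t))\<^sup>2
             + \<epsilon> * (L2norm (\<lambda>x. sqrt \<mu> * pdx u x t + b / sqrt \<mu> * \<phi> x t))\<^sup>2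
             + \<epsilon> * (L2norm (\<lambda>x. \<phi> x t))\<^sup>2
             + \<epsilon> * (L2norm (\<lambda>x. pdx \<phi> x t))\<^sup>2)"
proof -
  note pos = assms(1-9)
  define g where "g = set_lebesgue_integral lborel {0<..} \<kappa>"
  define M1 where "M1 = J * (g + 1) / (2 * \<beta>\<^sup>2 * \<delta>)"
  define C2 where "C2 = (c * \<alpha> / \<beta>)\<^sup>2 / 4"
  define K3 where "K3 = 2 * pi\<^sup>2 / \<mu> * (1 + b\<^sup>2 / \<mu>)"
  define C3 where "C3 = (c * b / \<beta>)\<^sup>2 * K3 / 2"
  define C4 where "C4 = (c * \<xi> / \<beta>)\<^sup>2 * pi\<^sup>2 / 2"
  define M where "M = c + M1 + C2 + C3 + C4 + 1"
  have kpos: "\<forall>s>0. 0 \<le> \<kappa> s" using h2(1) by (meson less_eq_real_def)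
  have g0: "g \<ge> 0" unfolding g_def set_lebesgue_integral_def
    using kpos by (intro integral_nonneg_AE AE_I2) (auto split: split_indicator)
  have K3p: "K3 > 0" using pos by (simp add: K3_def add_pos_nonneg)
  have M1p: "M1 \<ge> 0" using pos g0 h4 by (simp add: M1_def)
  have C2p: "C2 \<ge> 0" by (simp add: C2_def)
  have C3p: "C3 \<ge> 0" using K3p by (simp add: C3_def)
  have C4p: "C4 \<ge> 0" by (simp add: C4_def)
  have Mp: "M > 0" using pos M1p C2p C3p C4p by (simp add: M_def)
  show ?thesis
  proof (rule exI[of _ M], rule conjI[OF Mp], intro allI impI)
    fix u \<phi> \<theta> :: "real \<Rightarrow> real \<Rightarrow> real" and \<eta> :: "real \<Rightarrow> real \<Rightarrow> real \<Rightarrow> real" and \<epsilon> t :: real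
    assume H: "regular2 u \<and> regular2 \<phi> \<and> regular2 \<theta> \<and> regular_eta \<kappa> \<kappa>' \<eta> \<and>
      (\<forall>x\<in>{0<..<pi}. \<forall>t>0.
         \<rho> * pdt (pdt u) x t = \<mu> * pdx (pdx u) x t + b * pdx \<phi> x t \<and>
         J * pdt (pdt \<phi>) x t = \<alpha> * pdx (pdx \<phi>) x t - b * pdx u x t - \<xi> * \<phi> x t
                                 - \<beta> * pdx \<theta> x t \<and>
         c * pdt \<theta> x t = - \<beta> * pdt (pdx \<phi>) x t
                          + set_lebesgue_integral lborel {0<..} (\<lambda>s. \<kappa> s * e_xx \<eta> x s t) \<and>
         (\<forall>s>0. e_t \<eta> x s t = \<theta> x t - e_s \<eta> x s t)) \<and>
      (\<forall>t>0. u 0 t = 0 \<and> u pi t = 0 \<and> pdx \<phi> 0 t = 0 \<and> pdx \<phi> pi t = 0 \<and>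
             \<theta> 0 t = 0 \<and> \<theta> pi t = 0 \<and>
             (\<forall>s\<ge>0. \<eta> 0 s t = 0 \<and> \<eta> pi s t = 0) \<and>
             (\<forall>x\<in>{0..pi}. \<eta> x 0 t = 0)) \<and>
      (\<forall>t>0. integral {0..pi} (\<lambda>x. \<phi> x t) = 0)"
      and ep: "\<epsilon> > 0" and t: "t > 0"
    have ru: "regular2 u" and rp: "regular2 \<phi>" and rt: "regular2 \<theta>" and eta: "regular_eta \<kappa> \<kappa>' \<eta>"
      using H by blast+
    have z: "\<forall>\<tau>>0. integral {0..pi} (\<lambda>x. \<phi> x \<tau>) = 0" using H by blast
    have eq2: "\<And>y. y \<in> {0<..<pi} \<Longrightarrow> J * pdt (pdt \<phi>) y t = \<alpha> * pdx (pdx \<phi>) y t - b * pdx u y t - \<xi> * \<phi> y t - \<beta> * pdx \<theta> y t"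
      using H t by blast
    have eq3: "\<And>y. y \<in> {0<..<pi} \<Longrightarrow> c * pdt \<theta> y t = - \<beta> * pdt (pdx \<phi>) y t
                          + set_lebesgue_integral lborel {0<..} (\<lambda>s. \<kappa> s * e_xx \<eta> y s t)"
      using H t by blast
    have bc: "u 0 t = 0" "pdx \<phi> 0 t = 0" "\<theta> 0 t = 0" using H t by blast+
    have c_th: "continuous_on {0..pi} (\<lambda>x. \<theta> x t)" by (rule cont_slice[OF reg2C(1)[OF rt] t]) auto
    have c_tht: "continuous_on {0..pi} (\<lambda>x. pdt \<theta> x t)" by (rule cont_slice[OF reg2C(4)[OF rt] t]) auto
    have c_pht: "continuous_on {0..pi} (\<lambda>x. pdt \<phi> x t)" by (rule cont_slice[OF reg2C(4)[OF rp] t]) auto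
    have c_phtt: "continuous_on {0..pi} (\<lambda>x. pdt (pdt \<phi>) x t)" by (rule cont_slice[OF reg2C(5)[OF rp] t]) auto
    have c_ptx: "continuous_on {0..pi} (\<lambda>x. pdt (pdx \<phi>) x t)" by (rule cont_slice[OF reg2C(7)[OF rp] t]) auto
    have c_phx: "continuous_on {0..pi} (\<lambda>x. pdx \<phi> x t)" by (rule cont_slice[OF reg2C(2)[OF rp] t]) auto
    have c_ph: "continuous_on {0..pi} (\<lambda>x. \<phi> x t)" by (rule cont_slice[OF reg2C(1)[OF rp] t]) auto
    have c_u: "continuous_on {0..pi} (\<lambda>x. u x t)" by (rule cont_slice[OF reg2C(1)[OF ru] t]) auto
    define P where "P x = integral {0..x} (\<lambda>y. pdt \<phi> y t)" for x
    define Pt where "Pt x = integral {0..x} (\<lambda>y. pdt (pdt \<phi>) y t)" for x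
    define Psi where "Psi x = integral {0..x} (\<lambda>y. \<phi> y t)" for x
    have c_P: "continuous_on {0..pi} P" unfolding P_def
      by (intro indefinite_integral_continuous_1 integrable_continuous_interval c_pht)
    have c_Pt: "continuous_on {0..pi} Pt" unfolding Pt_def
      by (intro indefinite_integral_continuous_1 integrable_continuous_interval c_phtt)
    have c_Psi: "continuous_on {0..pi} Psi" unfolding Psi_def
      by (intro indefinite_integral_continuous_1 integrable_continuous_interval c_ph)
    define D0 where "D0 = integral {0..pi} (\<lambda>x. pdt \<theta> x t * P x + \<theta> x t * Pt x)"
    have der: "((\<lambda>\<tau>. - (c * J / \<beta>) * L2inner (\<lambda>x. \<theta> x \<tau>) (\<lambda>x. integral {0..x} (\<lambda>y. pdt \<phi> y \<tau>)))
           has_real_derivative (- (c * J / \<beta>) * D0)) (at t)"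
      unfolding D0_def P_def Pt_def by (intro DERIV_cmult derivF[OF rp rt t])
    define N where "N = integral {0..pi} (\<lambda>x. pdt \<phi> x t * pdt \<phi> x t)"
    define T where "T = integral {0..pi} (\<lambda>x. \<theta> x t * \<theta> x t)"
    define W where "W = integral {0..pi} (\<lambda>x. (sqrt \<mu> * pdx u x t + b / sqrt \<mu> * \<phi> x t) * (sqrt \<mu> * pdx u x t + b / sqrt \<mu> * \<phi> x t))"
    define Ph where "Ph = integral {0..pi} (\<lambda>x. \<phi> x t * \<phi> x t)"
    define Phx where "Phx = integral {0..pi} (\<lambda>x. pdx \<phi> x t * pdx \<phi> x t)"
    define I1 where "I1 = integral {0..pi} (\<lambda>x. \<theta> x t * pdx \<phi> x t)"
    define I2 where "I2 = integral {0..pi} (\<lambda>x. \<theta> x t * u x t)"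
    define I3 where "I3 = integral {0..pi} (\<lambda>x. \<theta> x t * Psi x)"
    define K where "K = set_lebesgue_integral lborel {0<..} (\<lambda>s. \<kappa> s * integral {0..pi} (\<lambda>x. e_x \<eta> x s t * pdt \<phi> x t))"
    define Q where "Q = set_lebesgue_integral lborel {0<..} (\<lambda>s. \<kappa>' s * integral {0..pi} (\<lambda>x. e_x \<eta> x s t * e_x \<eta> x s t))"
    define A where "A = integral {0..pi} (\<lambda>x. pdt \<theta> x t * P x)"
    define B where "B = integral {0..pi} (\<lambda>x. \<theta> x t * Pt x)"
    have D0AB: "D0 = A + B" unfolding D0_def A_def B_def
      using c_tht c_P c_th c_Pt by (intro integral_add integrable_continuous_interval continuous_intros)
    have LmP: "integral {0..pi} (\<lambda>x. set_lebesgue_integral lborel {0<..} (\<lambda>s. \<kappa> s * e_xx \<eta> x s t) * P x) = - K"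
      unfolding K_def P_def by (rule mem_term(2)[OF eta rp t z])
    have spike: "integral {0..pi} (\<lambda>x. set_lebesgue_integral lborel {0<..} (\<lambda>s. \<kappa> s * e_xx \<eta> x s t) * P x)
        = integral {0..pi} (\<lambda>x. (c * pdt \<theta> x t + \<beta> * pdt (pdx \<phi>) x t) * P x)"
    proof (rule integral_spike[where S="{0,pi}"])
      show "negligible {0, pi}" by simp
      fix x assume "x \<in> {0..pi} - {0, pi}"
      then have "x \<in> {0<..<pi}" by auto
      then show "(c * pdt \<theta> x t + \<beta> * pdt (pdx \<phi>) x t) * P x = set_lebesgue_integral lborel {0<..} (\<lambda>s. \<kappa> s * e_xx \<eta> x s t) * P x"
        using eq3 by simp
    qed
    have lin1: "integral {0..pi} (\<lambda>x. (c * pdt \<theta> x t + \<beta> * pdt (pdx \<phi>) x t) * P x)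
        = c * A + \<beta> * integral {0..pi} (\<lambda>x. pdt (pdx \<phi>) x t * P x)"
    proof -
      have h1: "((\<lambda>x. pdt \<theta> x t * P x) has_integral A) {0..pi}" unfolding A_def
        using c_tht c_P by (intro integrable_integral integrable_continuous_interval continuous_intros)
      have h2: "((\<lambda>x. pdt (pdx \<phi>) x t * P x) has_integral integral {0..pi} (\<lambda>x. pdt (pdx \<phi>) x t * P x)) {0..pi}"
        using c_ptx c_P by (intro integrable_integral integrable_continuous_interval continuous_intros)
      have "((\<lambda>x. c * (pdt \<theta> x t * P x) + \<beta> * (pdt (pdx \<phi>) x t * P x)) has_integral
          c * A + \<beta> * integral {0..pi} (\<lambda>x. pdt (pdx \<phi>) x t * P x)) {0..pi}"
        by (intro has_integral_add has_integral_mult_right h1 h2)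
      then show ?thesis by (simp add: integral_unique algebra_simps)
    qed
    have ptxP: "integral {0..pi} (\<lambda>x. pdt (pdx \<phi>) x t * P x) = - N"
      unfolding P_def N_def by (rule term_ptx[OF rp t z])
    have cA: "c * A = - K + \<beta> * N" using LmP spike lin1 ptxP by simp
    have JB: "J * B = \<alpha> * I1 - b * I2 - \<xi> * I3 - \<beta> * T"
    proof -
      have "B = integral {0..pi} (\<lambda>x. (1 / J) * (\<alpha> * (\<theta> x t * pdx \<phi> x t) - b * (\<theta> x t * u x t) - \<xi> * (\<theta> x t * Psi x) - \<beta> * (\<theta> x t * \<theta> x t)))"
        unfolding B_def
      proof (intro integral_cong)
        fix x assume x: "x \<in> {0..pi}"
        have "Pt x = (\<alpha> * pdx \<phi> x t - b * u x t - \<xi> * Psi x - \<beta> * \<theta> x t) / J"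
          unfolding Pt_def Psi_def by (rule Pt_eq[OF ru rp rt t x pos(2) eq2 bc])
        then show "\<theta> x t * Pt x = (1 / J) * (\<alpha> * (\<theta> x t * pdx \<phi> x t) - b * (\<theta> x t * u x t) - \<xi> * (\<theta> x t * Psi x) - \<beta> * (\<theta> x t * \<theta> x t))"
          by (simp add: field_simps)
      qed
      also have "\<dots> = (1 / J) * (\<alpha> * I1 - b * I2 - \<xi> * I3 - \<beta> * T)"
      proof -
        have h1: "((\<lambda>x. \<theta> x t * pdx \<phi> x t) has_integral I1) {0..pi}" unfolding I1_def
          using c_th c_phx by (intro integrable_integral integrable_continuous_interval continuous_intros)
        have h2: "((\<lambda>x. \<theta> x t * u x t) has_integral I2) {0..pi}" unfolding I2_def
          using c_th c_u by (intro integrable_integral integrable_continuous_interval continuous_intros)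
        have h3: "((\<lambda>x. \<theta> x t * Psi x) has_integral I3) {0..pi}" unfolding I3_def
          using c_th c_Psi by (intro integrable_integral integrable_continuous_interval continuous_intros)
        have h4: "((\<lambda>x. \<theta> x t * \<theta> x t) has_integral T) {0..pi}" unfolding T_def
          using c_th by (intro integrable_integral integrable_continuous_interval continuous_intros)
        have "((\<lambda>x. (1 / J) * (\<alpha> * (\<theta> x t * pdx \<phi> x t) - b * (\<theta> x t * u x t) - \<xi> * (\<theta> x t * Psi x) - \<beta> * (\<theta> x t * \<theta> x t)))
            has_integral (1 / J) * (\<alpha> * I1 - b * I2 - \<xi> * I3 - \<beta> * T)) {0..pi}"
          by (intro has_integral_mult_right has_integral_diff h1 h2 h3 h4)
        then show ?thesis by (rule integral_unique)
      qed
      finally show ?thesis using pos(2) by simp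
    qed
    have Dfin: "- (c * J / \<beta>) * D0 = (J / \<beta>) * K - J * N + (- (c * \<alpha> / \<beta>)) * I1 + (c * b / \<beta>) * I2 + (c * \<xi> / \<beta>) * I3 + c * T"
    proof -
      have "- (c * J / \<beta>) * D0 = - (J / \<beta>) * (c * A) - (c / \<beta>) * (J * B)"
        unfolding D0AB by (simp add: field_simps, simp add: add_divide_distrib)
      also have "\<dots> = (J / \<beta>) * K - J * N + (- (c * \<alpha> / \<beta>)) * I1 + (c * b / \<beta>) * I2 + (c * \<xi> / \<beta>) * I3 + c * T"
        unfolding cA JB using pos by (simp add: field_simps)
      finally show ?thesis .
    qed
    have bmem: "(J / \<beta>) * K \<le> (J / 2) * N - M1 * Q"
      using mem_bound[OF h1(2) h2(1) h2(3) h4 eta rp t pos(2) pos(9) mem_term(1)[OF eta rp t z]]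
      unfolding K_def N_def M1_def g_def Q_def L2norm_sq .
    have b1: "(- (c * \<alpha> / \<beta>)) * I1 \<le> \<epsilon> * Phx + (C2 / \<epsilon>) * T"
    proof -
      have y: "(- (c * \<alpha> / \<beta>)) * I1 \<le> \<epsilon> * Phx + (- (c * \<alpha> / \<beta>))\<^sup>2 / (4 * \<epsilon>) * T"
        unfolding I1_def Phx_def T_def by (rule int_young[OF c_th c_phx ep])
      have e: "(- (c * \<alpha> / \<beta>))\<^sup>2 / (4 * \<epsilon>) = C2 / \<epsilon>" by (simp add: C2_def)
      show ?thesis using y unfolding e .
    qed
    define \<gamma>3 where "\<gamma>3 = \<epsilon> / (2 * K3)"
    have g3p: "\<gamma>3 > 0" using ep K3p by (simp add: \<gamma>3_def)
    have W0: "W \<ge> 0" unfolding W_def by (rule sq_int_nonneg)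
    have Ph0: "Ph \<ge> 0" unfolding Ph_def by (rule sq_int_nonneg)
    have T0: "T \<ge> 0" unfolding T_def by (rule sq_int_nonneg)
    have b2: "(c * b / \<beta>) * I2 \<le> (\<epsilon> / 2) * W + (\<epsilon> / 2) * Ph + (C3 / \<epsilon>) * T"
    proof -
      have y: "(c * b / \<beta>) * I2 \<le> \<gamma>3 * integral {0..pi} (\<lambda>x. u x t * u x t) + (c * b / \<beta>)\<^sup>2 / (4 * \<gamma>3) * T"
        unfolding I2_def T_def by (rule int_young[OF c_th c_u g3p])
      have ub: "integral {0..pi} (\<lambda>x. u x t * u x t) \<le> pi\<^sup>2 * ((2 / \<mu>) * (W + (b\<^sup>2 / \<mu>) * Ph))"
        unfolding W_def Ph_def by (rule u_bound[OF ru rp t bc(1) pos(4)])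
      have kb: "pi\<^sup>2 * ((2 / \<mu>) * (W + (b\<^sup>2 / \<mu>) * Ph)) \<le> K3 * (W + Ph)"
      proof -
        have "K3 * (W + Ph) - pi\<^sup>2 * ((2 / \<mu>) * (W + (b\<^sup>2 / \<mu>) * Ph)) = (2 * pi\<^sup>2 / \<mu>) * ((b\<^sup>2 / \<mu>) * W + Ph)"
          unfolding K3_def using pos(4) by (simp add: field_simps)
        moreover have "(2 * pi\<^sup>2 / \<mu>) * ((b\<^sup>2 / \<mu>) * W + Ph) \<ge> 0" using pos W0 Ph0 by simp
        ultimately show ?thesis by linarith
      qed
      have "\<gamma>3 * integral {0..pi} (\<lambda>x. u x t * u x t) \<le> \<gamma>3 * (K3 * (W + Ph))"
        using ub kb g3p by (intro mult_left_mono) auto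
      also have "\<dots> = (\<epsilon> / 2) * W + (\<epsilon> / 2) * Ph" using K3p by (simp add: \<gamma>3_def field_simps)
      finally have p1: "\<gamma>3 * integral {0..pi} (\<lambda>x. u x t * u x t) \<le> (\<epsilon> / 2) * W + (\<epsilon> / 2) * Ph" .
      have p2: "(c * b / \<beta>)\<^sup>2 / (4 * \<gamma>3) = C3 / \<epsilon>" using K3p ep by (simp add: \<gamma>3_def C3_def field_simps)
      show ?thesis using y p1 unfolding p2 by linarith
    qed
    define \<gamma>4 where "\<gamma>4 = \<epsilon> / (2 * pi\<^sup>2)"
    have g4p: "\<gamma>4 > 0" using ep by (simp add: \<gamma>4_def)
    have b3: "(c * \<xi> / \<beta>) * I3 \<le> (\<epsilon> / 2) * Ph + (C4 / \<epsilon>) * T"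
    proof -
      have y: "(c * \<xi> / \<beta>) * I3 \<le> \<gamma>4 * integral {0..pi} (\<lambda>x. Psi x * Psi x) + (c * \<xi> / \<beta>)\<^sup>2 / (4 * \<gamma>4) * T"
        unfolding I3_def T_def by (rule int_young[OF c_th c_Psi g4p])
      have pb: "integral {0..pi} (\<lambda>x. Psi x * Psi x) \<le> pi\<^sup>2 * Ph"
        unfolding Psi_def Ph_def by (rule poinc[OF c_ph])
      have "\<gamma>4 * integral {0..pi} (\<lambda>x. Psi x * Psi x) \<le> \<gamma>4 * (pi\<^sup>2 * Ph)"
        using pb g4p by (intro mult_left_mono) auto
      also have "\<dots> = (\<epsilon> / 2) * Ph" by (simp add: \<gamma>4_def field_simps)
      finally have p1: "\<gamma>4 * integral {0..pi} (\<lambda>x. Psi x * Psi x) \<le> (\<epsilon> / 2) * Ph" .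
      have p2: "(c * \<xi> / \<beta>)\<^sup>2 / (4 * \<gamma>4) = C4 / \<epsilon>" using ep by (simp add: \<gamma>4_def C4_def field_simps)
      show ?thesis using y p1 unfolding p2 by linarith
    qed
    have Q0: "Q \<le> 0"
    proof -
      have "0 \<le> set_lebesgue_integral lborel {0<..} (\<lambda>s. - (\<kappa>' s * integral {0..pi} (\<lambda>x. e_x \<eta> x s t * e_x \<eta> x s t)))"
        unfolding set_lebesgue_integral_def
      proof (intro integral_nonneg_AE AE_I2)
        fix s :: real
        have "s > 0 \<Longrightarrow> \<kappa>' s * integral {0..pi} (\<lambda>x. e_x \<eta> x s t * e_x \<eta> x s t) \<le> 0"
          using h2(3) sq_int_nonneg[of "\<lambda>x. e_x \<eta> x s t"] by (simp add: mult_nonpos_nonneg)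
        then show "0 \<le> indicator {0<..} s *\<^sub>R - (\<kappa>' s * integral {0..pi} (\<lambda>x. e_x \<eta> x s t * e_x \<eta> x s t))"
          by (auto split: split_indicator)
      qed
      then show ?thesis unfolding Q_def set_lebesgue_integral_def by simp
    qed
    have fQ: "- M1 * Q \<le> - M * Q"
    proof -
      have "(M - M1) * Q \<le> 0" using Q0 C2p C3p C4p pos by (intro mult_nonneg_nonpos) (auto simp: M_def)
      then show ?thesis by (simp add: algebra_simps)
    qed
    have fT: "c * T + (C2 / \<epsilon>) * T + (C3 / \<epsilon>) * T + (C4 / \<epsilon>) * T \<le> M * (1 + 1 / \<epsilon>) * T"
    proof -
      have e: "c * T + (C2 / \<epsilon>) * T + (C3 / \<epsilon>) * T + (C4 / \<epsilon>) * T = (c + (C2 + C3 + C4) / \<epsilon>) * T"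
        by (simp add: algebra_simps add_divide_distrib)
      have "(C2 + C3 + C4) / \<epsilon> \<le> M / \<epsilon>" using ep M1p pos by (intro divide_right_mono) (auto simp: M_def)
      moreover have "c \<le> M" using M1p C2p C3p C4p by (simp add: M_def)
      ultimately have "c + (C2 + C3 + C4) / \<epsilon> \<le> M * (1 + 1 / \<epsilon>)" by (simp add: algebra_simps)
      then have "(c + (C2 + C3 + C4) / \<epsilon>) * T \<le> M * (1 + 1 / \<epsilon>) * T" using T0 by (rule mult_right_mono)
      then show ?thesis using e by simp
    qed
    have fW: "(\<epsilon> / 2) * W \<le> \<epsilon> * W" using W0 ep by simp
    have fN: "- (J / 2) * N = J / 2 * N - J * N" by simp
    have fPh: "(\<epsilon> / 2) * Ph + (\<epsilon> / 2) * Ph = \<epsilon> * Ph" by simp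
    have fin: "- (c * J / \<beta>) * D0 \<le> - (J / 2) * N - M * Q + M * (1 + 1 / \<epsilon>) * T + \<epsilon> * W + \<epsilon> * Ph + \<epsilon> * Phx"
      using Dfin bmem b1 b2 b3 fQ fT fW fN fPh by linarith
    show "\<exists>D. ((\<lambda>\<tau>. - (c * J / \<beta>) * L2inner (\<lambda>x. \<theta> x \<tau>) (\<lambda>x. integral {0..x} (\<lambda>y. pdt \<phi> y \<tau>)))
           has_real_derivative D) (at t) \<and>
        D \<le> - (J / 2) * (L2norm (\<lambda>x. pdt \<phi> x t))\<^sup>2
             - M * set_lebesgue_integral lborel {0<..} (\<lambda>s. \<kappa>' s * (L2norm (\<lambda>x. e_x \<eta> x s t))\<^sup>2)
             + M * (1 + 1 / \<epsilon>) * (L2norm (\<lambda>x. \<theta> x t))\<^sup>2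
             + \<epsilon> * (L2norm (\<lambda>x. sqrt \<mu> * pdx u x t + b / sqrt \<mu> * \<phi> x t))\<^sup>2
             + \<epsilon> * (L2norm (\<lambda>x. \<phi> x t))\<^sup>2
             + \<epsilon> * (L2norm (\<lambda>x. pdx \<phi> x t))\<^sup>2"
    proof (intro exI[of _ "- (c * J / \<beta>) * D0"] conjI der)
      show "- (c * J / \<beta>) * D0 \<le> - (J / 2) * (L2norm (\<lambda>x. pdt \<phi> x t))\<^sup>2
             - M * set_lebesgue_integral lborel {0<..} (\<lambda>s. \<kappa>' s * (L2norm (\<lambda>x. e_x \<eta> x s t))\<^sup>2)
             + M * (1 + 1 / \<epsilon>) * (L2norm (\<lambda>x. \<theta> x t))\<^sup>2
             + \<epsilon> * (L2norm (\<lambda>x. sqrt \<mu> * pdx u x t + b / sqrt \<mu> * \<phi> x t))\<^sup>2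
             + \<epsilon> * (L2norm (\<lambda>x. \<phi> x t))\<^sup>2
             + \<epsilon> * (L2norm (\<lambda>x. pdx \<phi> x t))\<^sup>2"
        using fin unfolding L2norm_sq N_def Q_def T_def W_def Ph_def Phx_def .
    qed
  qed
qed

end
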